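(* Consider the problem of minimizing $f(x)+h(x)$ subject to $Ax=b$, with $A\in\mathbb R^{m\times n}$, $A\neq0$, $b\in\mathbb R^m$, and the setting below. Run the following Bregman dual Condat--V\~u algorithm with line search: choose $x^{(0)}\in\operatorname{int}(\operatorname{dom}\phi_{\mathrm p})\cap\operatorname{dom}h$, $z^{(-1)}=z^{(0)}\in\mathbb R^m$, $\tau_{-1},\sigma_{-1}>0$ and $\delta\in(0,1]$, and set $\beta=\sigma_{-1}/\tau_{-1}$. At iteration $k\ge0$, choose $\bar\theta_k\ge1$; for $i=0,1,2,\dots$ set $\theta_k=2^{-i}\bar\theta_k$, $\tau_k=\theta_k\tau_{k-1}$, $\sigma_k=\theta_k\sigma_{k-1}$, and compute \[\bar z^{(k+1)}=z^{(k)}+\theta_k(z^{(k)}-z^{(k-1)}),\quad x^{(k+1)}=\mathrm{prox}^{\phi_{\mathrm p}}_{\tau_kf}\big(x^{(k)},\tau_k(A^T\bar z^{(k+1)}+\nabla h(x^{(k)}))\big),\quad z^{(k+1)}=z^{(k)}+\sigma_k(Ax^{(k+1)}-b);\] accept these iterates and parameters (and stop the inner loop) as soon as \[\langle z^{(k+1)}-\bar z^{(k+1)},A(x^{(k+1)}-x^{(k)})\rangle+h(x^{(k+1)})-h(x^{(k)})-\langle\nabla h(x^{(k)}),x^{(k+1)}-x^{(k)}\rangle\le\frac{\delta^2}{\tau_k}d_{\mathrm p}(x^{(k+1)},x^{(k)})+\frac1{2\sigma_k}\|\bar z^{(k+1)}-z^{(k+1)}\|^2 .\] Then at every iteration the backtracking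 terminates, and the accepted stepsizes satisfy, for all $k\ge0$, \[\tau_k\ge\tau_{\min}:=\min\Big\{\tau_{-1},\ \frac{-L+\sqrt{L^2+4\delta^2\beta\|A\|^2}}{4\beta\|A\|^2}\Big\},\qquad\sigma_k\ge\sigma_{\min}:=\beta\tau_{\min}.\]
   Context: $f:\mathbb R^n\to\mathbb R\cup\{+\infty\}$ and $h$ are closed convex, $h$ differentiable on its open convex domain, $f+h$ proper. A Bregman kernel $\phi_{\mathrm p}$ on $\mathbb R^n$ is convex with $\operatorname{int}(\operatorname{dom}\phi_{\mathrm p})\ne\emptyset$, continuous on its domain, continuously differentiable on the interior; $d_{\mathrm p}(x,y)=\phi_{\mathrm p}(x)-\phi_{\mathrm p}(y)-\langle\nabla\phi_{\mathrm p}(y),x-y\rangle$ on $\operatorname{dom}\phi_{\mathrm p}\times\operatorname{int}(\operatorname{dom}\phi_{\mathrm p})$, with $d_{\mathrm p}(x,x')\ge\frac12\|x-x'\|_{\mathrm p}^2$ for a norm $\|\cdot\|_{\mathrm p}$. $\mathrm{prox}^{\phi_{\mathrm p}}_F(y,a)=\operatorname{argmin}_x\big(F(x)+\langle a,x\rangle+d_{\mathrm p}(x,y)\big)$, assumed to be a unique point of $\operatorname{int}(\operatorname{dom}\phi_{\mathrm p})$ for all $a$ and $y\in\operatorname{int}(\operatorname{dom}\phi_{\mathrm p})$. Also $\operatorname{dom}\phi_{\mathrm p}\subseteq\operatorname{dom}h$ and $h(x)-h(x')-\langle\nabla h(x'),x-x'\rangle\le L\,d_{\mathrm p}(x,x')$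 for all $(x,x')\in\operatorname{dom}d_{\mathrm p}$, for some $L>0$. $\|\cdot\|$ is the Euclidean norm and $\|A\|=\sup_{u\ne0}\|Au\|/\|u\|_{\mathrm p}$. *)

theory Defs
  imports "HOL-Analysis.Analysis"
begin

definition econvex :: "('a::real_vector \<Rightarrow> ereal) \<Rightarrow> bool" where
  "econvex g \<longleftrightarrow> convex {(x, t::real). g x \<le> ereal t}"

definition eclosed :: "('a::real_normed_vector \<Rightarrow> ereal) \<Rightarrow> bool" where
  "eclosed g \<longleftrightarrow> closed {(x, t::real). g x \<le> ereal t}"

definition edom :: "('a \<Rightarrow> ereal) \<Rightarrow> 'a set" where
  "edom g = {x. g x < \<infinity>}"

definition is_norm :: "('a::real_vector \<Rightarrow> real) \<Rightarrow> bool" where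
  "is_norm np \<longleftrightarrow> (\<forall>x. np x = 0 \<longleftrightarrow> x = 0) \<and> (\<forall>c x. np (c *\<^sub>R x) = \<bar>c\<bar> * np x)
     \<and> (\<forall>x y. np (x + y) \<le> np x + np y)"

definition opnorm_p :: "(real^'n \<Rightarrow> real) \<Rightarrow> real^'n^'m \<Rightarrow> real" where
  "opnorm_p np A = (SUP u\<in>{u. u \<noteq> 0}. norm (A *v u) / np u)"

definition bdist :: "(real^'n \<Rightarrow> real) \<Rightarrow> (real^'n \<Rightarrow> real^'n) \<Rightarrow> real^'n \<Rightarrow> real^'n \<Rightarrow> real" where
  "bdist \<phi> g\<phi> x y = \<phi> x - \<phi> y - g\<phi> y \<bullet> (x - y)"

text \<open>Minimizers of F(x) + <a,x> + d_p(x,y); d_p is +infinity outside dom phi = Dp.\<close>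

definition is_bprox_min :: "(real^'n) set \<Rightarrow> (real^'n \<Rightarrow> real) \<Rightarrow> (real^'n \<Rightarrow> real^'n)
    \<Rightarrow> (real^'n \<Rightarrow> ereal) \<Rightarrow> real^'n \<Rightarrow> real^'n \<Rightarrow> real^'n \<Rightarrow> bool" where
  "is_bprox_min Dp \<phi> g\<phi> F y a x \<longleftrightarrow> x \<in> Dp \<and>
     (\<forall>x'\<in>Dp. F x + ereal (a \<bullet> x + bdist \<phi> g\<phi> x y) \<le> F x' + ereal (a \<bullet> x' + bdist \<phi> g\<phi> x' y))"

definition bprox :: "(real^'n) set \<Rightarrow> (real^'n \<Rightarrow> real) \<Rightarrow> (real^'n \<Rightarrow> real^'n)
    \<Rightarrow> (real^'n \<Rightarrow> ereal) \<Rightarrow> real^'n \<Rightarrow> real^'n \<Rightarrow> real^'n" where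
  "bprox Dp \<phi> g\<phi> F y a = (THE x. is_bprox_min Dp \<phi> g\<phi> F y a x)"

text \<open>Algorithm state at the start of iteration k:
  (x^(k), z^(k), z^(k-1), tau_(k-1), sigma_(k-1)).\<close>

type_synonym ('n, 'm) bdcv_state = "(real^'n) \<times> (real^'m) \<times> (real^'m) \<times> real \<times> real"

definition bdcv_zbar :: "('n, 'm) bdcv_state \<Rightarrow> real \<Rightarrow> real^'m" where
  "bdcv_zbar s \<theta> = (case s of (x, z, zp, \<tau>p, \<sigma>p) \<Rightarrow> z + \<theta> *\<^sub>R (z - zp))"

definition bdcv_next :: "(real^'n) set \<Rightarrow> (real^'n \<Rightarrow> real) \<Rightarrow> (real^'n \<Rightarrow> real^'n)
    \<Rightarrow> (real^'n \<Rightarrow> ereal) \<Rightarrow> (real^'n \<Rightarrow> real^'n) \<Rightarrow> real^'n^'m \<Rightarrow> real^'m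
    \<Rightarrow> ('n, 'm) bdcv_state \<Rightarrow> real \<Rightarrow> ('n, 'm) bdcv_state" where
  "bdcv_next Dp \<phi> g\<phi> f gh A b s \<theta> = (case s of (x, z, zp, \<tau>p, \<sigma>p) \<Rightarrow>
     let \<tau> = \<theta> * \<tau>p; \<sigma> = \<theta> * \<sigma>p; zb = bdcv_zbar s \<theta>;
         xn = bprox Dp \<phi> g\<phi> (\<lambda>u. ereal \<tau> * f u) x (\<tau> *\<^sub>R (transpose A *v zb + gh x));
         zn = z + \<sigma> *\<^sub>R (A *v xn - b)
     in (xn, zn, z, \<tau>, \<sigma>))"

definition bdcv_accept :: "(real^'n) set \<Rightarrow> (real^'n \<Rightarrow> real) \<Rightarrow> (real^'n \<Rightarrow> real^'n)
    \<Rightarrow> (real^'n \<Rightarrow> ereal) \<Rightarrow> (real^'n \<Rightarrow> ereal) \<Rightarrow> (real^'n \<Rightarrow> real^'n) \<Rightarrow> real^'n^'m \<Rightarrow> real^'m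
    \<Rightarrow> real \<Rightarrow> ('n, 'm) bdcv_state \<Rightarrow> real \<Rightarrow> bool" where
  "bdcv_accept Dp \<phi> g\<phi> f h gh A b \<delta> s \<theta> = (case s of (x, z, zp, \<tau>p, \<sigma>p) \<Rightarrow>
     (case bdcv_next Dp \<phi> g\<phi> f gh A b s \<theta> of (xn, zn, _, \<tau>, \<sigma>) \<Rightarrow>
       let zb = bdcv_zbar s \<theta> in
       (zn - zb) \<bullet> (A *v (xn - x)) + real_of_ereal (h xn) - real_of_ereal (h x) - gh x \<bullet> (xn - x)
         \<le> \<delta>\<^sup>2 / \<tau> * bdist \<phi> g\<phi> xn x + 1 / (2 * \<sigma>) * (norm (zb - zn))\<^sup>2))"

fun bdcv_run :: "(real^'n) set \<Rightarrow> (real^'n \<Rightarrow> real) \<Rightarrow> (real^'n \<Rightarrow> real^'n)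
    \<Rightarrow> (real^'n \<Rightarrow> ereal) \<Rightarrow> (real^'n \<Rightarrow> ereal) \<Rightarrow> (real^'n \<Rightarrow> real^'n) \<Rightarrow> real^'n^'m \<Rightarrow> real^'m
    \<Rightarrow> real \<Rightarrow> real^'n \<Rightarrow> real^'m \<Rightarrow> real \<Rightarrow> real \<Rightarrow> (nat \<Rightarrow> real) \<Rightarrow> nat \<Rightarrow> ('n, 'm) bdcv_state" where
  "bdcv_run Dp \<phi> g\<phi> f h gh A b \<delta> x0 z0 \<tau>m1 \<sigma>m1 \<theta>bar 0 = (x0, z0, z0, \<tau>m1, \<sigma>m1)"
| "bdcv_run Dp \<phi> g\<phi> f h gh A b \<delta> x0 z0 \<tau>m1 \<sigma>m1 \<theta>bar (Suc k) =
     (let s = bdcv_run Dp \<phi> g\<phi> f h gh A b \<delta> x0 z0 \<tau>m1 \<sigma>m1 \<theta>bar k;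
          i = (LEAST i. bdcv_accept Dp \<phi> g\<phi> f h gh A b \<delta> s (\<theta>bar k / 2 ^ i))
      in bdcv_next Dp \<phi> g\<phi> f gh A b s (\<theta>bar k / 2 ^ i))"

end

theory Submission imports Defs begin

lemma isn_zero: "is_norm np \<Longrightarrow> np 0 = 0"
  unfolding is_norm_def by blast

lemma isn_scale: "is_norm np \<Longrightarrow> np (c *\<^sub>R x) = \<bar>c\<bar> * np x"
  unfolding is_norm_def by blast

lemma isn_tri: "is_norm np \<Longrightarrow> np (x + y) \<le> np x + np y"
  unfolding is_norm_def by blast

lemma isn_minus: "is_norm np \<Longrightarrow> np (- x) = np x"
  using isn_scale[of np "-1" x] by simp

lemma isn_nonneg: "is_norm np \<Longrightarrow> np x \<ge> 0"
  using isn_tri[of np x "-x"] isn_minus[of np x] isn_zero[of np] by simp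

lemma isn_pos: "is_norm np \<Longrightarrow> x \<noteq> 0 \<Longrightarrow> np x > 0"
  using isn_nonneg[of np x] unfolding is_norm_def by (metis less_eq_real_def)

lemma isn_diff_sym: "is_norm np \<Longrightarrow> np (x - y) = np (y - x)"
  using isn_minus[of np "x - y"] by simp

lemma isn_sum: assumes np: "is_norm np" and fin: "finite S" shows "np (sum g S) \<le> (\<Sum>i\<in>S. np (g i))"
  using fin
proof (induction S rule: finite_induct)
  case empty then show ?case by (simp add: isn_zero[OF np])
next
  case (insert a F)
  then show ?case using isn_tri[OF np, of "g a" "sum g F"] by simp
qed

lemma isn_upper:
  fixes np :: "'a::euclidean_space \<Rightarrow> real"
  assumes "is_norm np"
  shows "np x \<le> (\<Sum>b\<in>Basis. np b) * norm x"
proof -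
  have "np x = np (\<Sum>b\<in>Basis. (x \<bullet> b) *\<^sub>R b)" by (simp add: euclidean_representation)
  also have "\<dots> \<le> (\<Sum>b\<in>Basis. np ((x \<bullet> b) *\<^sub>R b))" by (rule isn_sum[OF assms]) simp
  also have "\<dots> = (\<Sum>b\<in>Basis. \<bar>x \<bullet> b\<bar> * np b)" using isn_scale[OF assms] by simp
  also have "\<dots> \<le> (\<Sum>b\<in>Basis. norm x * np b)"
    by (intro sum_mono mult_right_mono Basis_le_norm isn_nonneg[OF assms])
  also have "\<dots> = (\<Sum>b\<in>Basis. np b) * norm x" by (simp add: sum_distrib_left mult.commute)
  finally show ?thesis .
qed

lemma isn_lower:
  fixes np :: "'a::euclidean_space \<Rightarrow> real"
  assumes np: "is_norm np"
  shows "\<exists>c>0. \<forall>x. c * norm x \<le> np x"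
proof -
  define M where "M = (\<Sum>b\<in>Basis. np b)"
  have M0: "M \<ge> 0" unfolding M_def by (intro sum_nonneg isn_nonneg[OF np])
  have lip: "\<bar>np x - np y\<bar> \<le> M * norm (x - y)" for x y
  proof -
    have "np x \<le> np (x - y) + np y" using isn_tri[OF np, of "x - y" y] by simp
    moreover have "np y \<le> np (x - y) + np x" using isn_tri[OF np, of "y - x" x] isn_diff_sym[OF np, of x y] by simp
    moreover have "np (x - y) \<le> M * norm (x - y)" unfolding M_def by (rule isn_upper[OF np])
    ultimately show ?thesis by linarith
  qed
  have cont: "continuous_on (sphere 0 1) np"
    unfolding continuous_on_iff
  proof (intro ballI allI impI)
    fix x e assume "x \<in> sphere (0::'a) 1" "(0::real) < e"
    show "\<exists>d>0. \<forall>x'\<in>sphere 0 1. dist x' x < d \<longrightarrow> dist (np x') (np x) < e"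
    proof (intro exI[of _ "e / (M + 1)"] conjI ballI impI)
      show "e / (M + 1) > 0" using \<open>e > 0\<close> M0 by simp
      fix x' assume "dist x' x < e / (M + 1)"
      hence "(M + 1) * norm (x' - x) < e" using M0 by (simp add: dist_norm field_simps)
      moreover have "\<bar>np x' - np x\<bar> \<le> M * norm (x' - x)" by (rule lip)
      moreover have "M * norm (x' - x) \<le> (M + 1) * norm (x' - x)" by (simp add: mult_right_mono)
      ultimately show "dist (np x') (np x) < e" by (simp add: dist_real_def)
    qed
  qed
  obtain b :: 'a where b: "b \<in> Basis" using nonempty_Basis by blast
  hence "b \<in> sphere 0 1" by simp
  hence ne: "sphere (0::'a) 1 \<noteq> {}" by blast
  obtain x0 where x0: "x0 \<in> sphere 0 1" "\<forall>y\<in>sphere 0 1. np x0 \<le> np y"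
    using continuous_attains_inf[OF compact_sphere ne cont] by blast
  have c0: "np x0 > 0" using x0(1) by (intro isn_pos[OF np]) auto
  show ?thesis
  proof (intro exI[of _ "np x0"] conjI allI c0)
    fix x :: 'a
    show "np x0 * norm x \<le> np x"
    proof (cases "x = 0")
      case True then show ?thesis by (simp add: isn_zero[OF np])
    next
      case False
      hence "(1 / norm x) *\<^sub>R x \<in> sphere 0 1" by simp
      hence "np x0 \<le> np ((1 / norm x) *\<^sub>R x)" using x0(2) by blast
      also have "\<dots> = np x / norm x" using isn_scale[OF np] by simp
      finally show ?thesis using False by (simp add: field_simps)
    qed
  qed
qed

lemma opnorm_bound:
  fixes A :: "real^'n^'m"
  assumes np: "is_norm np"
  shows "norm (A *v u) \<le> opnorm_p np A * np u"
    and "A \<noteq> 0 \<Longrightarrow> opnorm_p np A > 0"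
proof -
  obtain c where c: "c > 0" "\<forall>x. c * norm x \<le> np x" using isn_lower[OF np] by blast
  obtain K where K: "\<forall>x. norm (A *v x) \<le> norm x * K" and K0: "K > 0"
    using bounded_linear.pos_bounded[OF matrix_vector_mul_bounded_linear[of A]] by blast
  have bdd: "bdd_above ((\<lambda>u. norm (A *v u) / np u) ` {u. u \<noteq> 0})"
  proof (rule bdd_aboveI2)
    fix u :: "real^'n" assume "u \<in> {u. u \<noteq> 0}"
    hence pu: "np u > 0" using isn_pos[OF np] by auto
    have "norm (A *v u) \<le> K * norm u" using K by (simp add: mult.commute)
    also have "\<dots> \<le> K * (np u / c)" using c K0 by (intro mult_left_mono) (auto simp: field_simps)
    finally show "norm (A *v u) / np u \<le> K / c" using pu c by (simp add: field_simps)
  qed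
  have up: "u \<noteq> 0 \<Longrightarrow> norm (A *v u) / np u \<le> opnorm_p np A" for u
    unfolding opnorm_p_def by (rule cSUP_upper[OF _ bdd]) simp
  show "norm (A *v u) \<le> opnorm_p np A * np u"
  proof (cases "u = 0")
    case True then show ?thesis by (simp add: isn_zero[OF np])
  next
    case False
    then show ?thesis using up[OF False] isn_pos[OF np False] by (simp add: field_simps)
  qed
  assume "A \<noteq> 0"
  then obtain u where "A *v u \<noteq> A *v 0" using matrix_eq[of A 0] by auto
  hence Au: "A *v u \<noteq> 0" and u: "u \<noteq> 0" by auto
  have "0 < norm (A *v u) / np u" using Au isn_pos[OF np u] by simp
  also have "\<dots> \<le> opnorm_p np A" by (rule up[OF u])
  finally show "opnorm_p np A > 0" .
qed


lemma acc_ineq: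
  fixes p H d nw nu nA \<tau> \<sigma> \<delta> L :: real
  assumes "p \<le> nw * nA * nu" "H \<le> L * d" "nu\<^sup>2 \<le> 2 * d" "\<tau> > 0" "\<sigma> > 0"
    "\<sigma> * nA\<^sup>2 + L \<le> \<delta>\<^sup>2 / \<tau>" "nA \<ge> 0" "nw \<ge> 0" "nu \<ge> 0"
  shows "p + H \<le> \<delta>\<^sup>2 / \<tau> * d + 1 / (2 * \<sigma>) * nw\<^sup>2"
proof -
  have d0: "d \<ge> 0" using assms(3) by (smt (verit) zero_le_power2)
  have "0 \<le> (nw - \<sigma> * (nA * nu))\<^sup>2" by simp
  hence "2 * \<sigma> * (nw * nA * nu) \<le> nw\<^sup>2 + \<sigma>\<^sup>2 * (nA * nu)\<^sup>2"
    by (simp add: power2_eq_square algebra_simps)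
  hence "nw * nA * nu \<le> nw\<^sup>2 / (2 * \<sigma>) + \<sigma> * nA\<^sup>2 * nu\<^sup>2 / 2"
    using assms(5) by (simp add: field_simps power2_eq_square)
  also have "\<sigma> * nA\<^sup>2 * nu\<^sup>2 / 2 \<le> \<sigma> * nA\<^sup>2 * d"
    using assms(3,5) by (simp add: mult_left_mono)
  finally have 1: "p \<le> nw\<^sup>2 / (2 * \<sigma>) + \<sigma> * nA\<^sup>2 * d" using assms(1) by linarith
  have "(\<sigma> * nA\<^sup>2 + L) * d \<le> \<delta>\<^sup>2 / \<tau> * d" using assms(6) d0 by (rule mult_right_mono)
  then show ?thesis using 1 assms(2) by (simp add: algebra_simps)
qed

lemma quad_le:
  fixes a L \<delta> t :: real
  assumes "a > 0" "L > 0" "t > 0" "t \<le> (- L + sqrt (L\<^sup>2 + 4 * \<delta>\<^sup>2 * a)) / (2 * a)"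
  shows "a * t\<^sup>2 + L * t \<le> \<delta>\<^sup>2"
proof -
  have h1: "2 * a * t + L \<le> sqrt (L\<^sup>2 + 4 * \<delta>\<^sup>2 * a)" using assms(1,4) by (simp add: field_simps)
  have h2: "0 \<le> 2 * a * t + L" using assms by simp
  have y0: "0 \<le> L\<^sup>2 + 4 * \<delta>\<^sup>2 * a" using assms(1) by simp
  have "(2 * a * t + L)\<^sup>2 \<le> (sqrt (L\<^sup>2 + 4 * \<delta>\<^sup>2 * a))\<^sup>2" using power_mono[OF h1 h2] .
  hence "(2 * a * t + L)\<^sup>2 \<le> L\<^sup>2 + 4 * \<delta>\<^sup>2 * a" using real_sqrt_pow2[OF y0] by simp
  hence "4 * a * (a * t\<^sup>2 + L * t) \<le> 4 * a * \<delta>\<^sup>2" by (simp add: power2_eq_square algebra_simps)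
  then show ?thesis using assms(1) by simp
qed

lemma tstar_pos:
  fixes a L \<delta> :: real
  assumes "a > 0" "L > 0" "\<delta> > 0"
  shows "(- L + sqrt (L\<^sup>2 + 4 * \<delta>\<^sup>2 * a)) / (2 * a) > 0"
proof -
  have "L\<^sup>2 < L\<^sup>2 + 4 * \<delta>\<^sup>2 * a" using assms by simp
  hence "L < sqrt (L\<^sup>2 + 4 * \<delta>\<^sup>2 * a)" by (rule real_less_rsqrt)
  then show ?thesis using assms by simp
qed

theorem mainTheorem6:
  fixes f h :: "real^'n \<Rightarrow> ereal"
    and gh g\<phi> :: "real^'n \<Rightarrow> real^'n"
    and \<phi> :: "real^'n \<Rightarrow> real" and Dp :: "(real^'n) set"
    and np :: "real^'n \<Rightarrow> real"
    and A :: "real^'n^'m" and b :: "real^'m"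
    and L \<delta> \<tau>m1 \<sigma>m1 :: real and x0 :: "real^'n" and z0 :: "real^'m"
    and \<theta>bar :: "nat \<Rightarrow> real"
  assumes f_closed: "econvex f" "eclosed f" "\<forall>x. f x \<noteq> -\<infinity>"
    and h_closed: "econvex h" "eclosed h" "\<forall>x. h x \<noteq> -\<infinity>"
    and h_dom: "open (edom h)" "convex (edom h)"
    and h_diff: "\<forall>x\<in>edom h. ((\<lambda>y. real_of_ereal (h y)) has_derivative (\<lambda>v. gh x \<bullet> v)) (at x)"
    and proper: "\<exists>x. f x + h x < \<infinity>"
    and \<phi>_kernel: "convex Dp" "convex_on Dp \<phi>" "interior Dp \<noteq> {}" "continuous_on Dp \<phi>"
      "\<forall>x\<in>interior Dp. (\<phi> has_derivative (\<lambda>v. g\<phi> x \<bullet> v)) (at x)"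
      "continuous_on (interior Dp) g\<phi>"
    and np_norm: "is_norm np"
    and strong: "\<forall>x\<in>Dp. \<forall>x'\<in>interior Dp. bdist \<phi> g\<phi> x x' \<ge> 1/2 * (np (x - x'))\<^sup>2"
    and prox_ok: "\<forall>\<tau>>0. \<forall>y\<in>interior Dp. \<forall>a. \<exists>x\<in>interior Dp.
        is_bprox_min Dp \<phi> g\<phi> (\<lambda>u. ereal \<tau> * f u) y a x \<and>
        (\<forall>x'. is_bprox_min Dp \<phi> g\<phi> (\<lambda>u. ereal \<tau> * f u) y a x' \<longrightarrow> x' = x)"
    and dom_sub: "Dp \<subseteq> edom h"
    and L_pos: "L > 0"
    and L_smooth: "\<forall>x\<in>Dp. \<forall>x'\<in>interior Dp.
        real_of_ereal (h x) - real_of_ereal (h x') - gh x' \<bullet> (x - x') \<le> L * bdist \<phi> g\<phi> x x'"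
    and A_nz: "A \<noteq> 0"
    and x0: "x0 \<in> interior Dp \<inter> edom h"
    and steps: "\<tau>m1 > 0" "\<sigma>m1 > 0"
    and \<delta>: "0 < \<delta>" "\<delta> \<le> 1"
    and \<theta>bar: "\<forall>k. \<theta>bar k \<ge> 1"
  shows "\<forall>k. (\<exists>i. bdcv_accept Dp \<phi> g\<phi> f h gh A b \<delta>
                  (bdcv_run Dp \<phi> g\<phi> f h gh A b \<delta> x0 z0 \<tau>m1 \<sigma>m1 \<theta>bar k) (\<theta>bar k / 2 ^ i))
       \<and> (let \<beta> = \<sigma>m1 / \<tau>m1; nA = opnorm_p np A;
              \<tau>min = min \<tau>m1 ((- L + sqrt (L\<^sup>2 + 4 * \<delta>\<^sup>2 * \<beta> * nA\<^sup>2)) / (4 * \<beta> * nA\<^sup>2));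
              s' = bdcv_run Dp \<phi> g\<phi> f h gh A b \<delta> x0 z0 \<tau>m1 \<sigma>m1 \<theta>bar (Suc k)
          in fst (snd (snd (snd s'))) \<ge> \<tau>min \<and> snd (snd (snd (snd s'))) \<ge> \<beta> * \<tau>min)"
proof -
  define \<beta> where "\<beta> = \<sigma>m1 / \<tau>m1"
  define nA where "nA = opnorm_p np A"
  define tstar where "tstar = (- L + sqrt (L\<^sup>2 + 4 * \<delta>\<^sup>2 * (\<beta> * nA\<^sup>2))) / (2 * (\<beta> * nA\<^sup>2))"
  define \<tau>min where "\<tau>min = min \<tau>m1 (tstar / 2)"
  have \<beta>0: "\<beta> > 0" using steps unfolding \<beta>_def by simp
  have nA0: "nA > 0" unfolding nA_def using opnorm_bound(2)[OF np_norm A_nz] .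
  have nAb: "norm (A *v u) \<le> nA * np u" for u unfolding nA_def by (rule opnorm_bound(1)[OF np_norm])
  have a0: "\<beta> * nA\<^sup>2 > 0" using \<beta>0 nA0 by simp
  have ts0: "tstar > 0" unfolding tstar_def using tstar_pos[OF a0 L_pos \<delta>(1)] .
  have tmin0: "\<tau>min > 0" unfolding \<tau>min_def using ts0 steps by simp
  have quad: "\<beta> * nA\<^sup>2 * t\<^sup>2 + L * t \<le> \<delta>\<^sup>2" if "t > 0" "t \<le> tstar" for t
    using quad_le[OF a0 L_pos that(1)] that(2) unfolding tstar_def by simp
  have nxt: "\<exists>xn. xn \<in> interior Dp \<and> bdcv_next Dp \<phi> g\<phi> f gh A b (x, z, zp, \<tau>p, \<sigma>p) \<theta>
      = (xn, z + (\<theta> * \<sigma>p) *\<^sub>R (A *v xn - b), z, \<theta> * \<tau>p, \<theta> * \<sigma>p)"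
    if "x \<in> interior Dp" "\<tau>p > 0" "\<theta> > 0" for x z zp \<tau>p \<sigma>p \<theta>
  proof -
    note h = that
    have tp: "\<theta> * \<tau>p > 0" using that by simp
    let ?a = "(\<theta> * \<tau>p) *\<^sub>R (transpose A *v bdcv_zbar (x, z, zp, \<tau>p, \<sigma>p) \<theta> + gh x)"
    from prox_ok[rule_format, OF tp h(1), of ?a] obtain xs where xs: "xs \<in> interior Dp"
      "is_bprox_min Dp \<phi> g\<phi> (\<lambda>u. ereal (\<theta> * \<tau>p) * f u) x ?a xs \<and>
      (\<forall>x'. is_bprox_min Dp \<phi> g\<phi> (\<lambda>u. ereal (\<theta> * \<tau>p) * f u) x ?a x' \<longrightarrow> x' = xs)"
      by (rule bexE)
    have "bprox Dp \<phi> g\<phi> (\<lambda>u. ereal (\<theta> * \<tau>p) * f u) x ?a = xs"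
      unfolding bprox_def using xs(2) by (intro the_equality) auto
    then show ?thesis using xs(1) unfolding bdcv_next_def Let_def by auto
  qed
  have acc: "bdcv_accept Dp \<phi> g\<phi> f h gh A b \<delta> (x, z, zp, \<tau>p, \<beta> * \<tau>p) \<theta>"
    if "x \<in> interior Dp" "\<tau>p > 0" "\<theta> > 0" "\<theta> * \<tau>p \<le> tstar" for x z zp \<tau>p \<theta>
  proof -
    note h = that
    obtain xn where xn: "xn \<in> interior Dp" and nx: "bdcv_next Dp \<phi> g\<phi> f gh A b (x, z, zp, \<tau>p, \<beta> * \<tau>p) \<theta>
      = (xn, z + (\<theta> * (\<beta> * \<tau>p)) *\<^sub>R (A *v xn - b), z, \<theta> * \<tau>p, \<theta> * (\<beta> * \<tau>p))"
      using nxt[OF h(1-3)] by blast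
    define zb where "zb = bdcv_zbar (x, z, zp, \<tau>p, \<beta> * \<tau>p) \<theta>"
    define zn where "zn = z + (\<theta> * (\<beta> * \<tau>p)) *\<^sub>R (A *v xn - b)"
    define \<tau> where "\<tau> = \<theta> * \<tau>p"
    have \<tau>0: "\<tau> > 0" unfolding \<tau>_def using h by simp
    have \<sigma>eq: "\<theta> * (\<beta> * \<tau>p) = \<beta> * \<tau>" unfolding \<tau>_def by simp
    have xnD: "xn \<in> Dp" using xn interior_subset by blast
    have "(zn - zb) \<bullet> (A *v (xn - x)) \<le> norm (zn - zb) * norm (A *v (xn - x))"
      by (rule norm_cauchy_schwarz)
    also have "\<dots> \<le> norm (zn - zb) * (nA * np (xn - x))" by (intro mult_left_mono nAb) simp
    finally have p: "(zn - zb) \<bullet> (A *v (xn - x)) \<le> norm (zn - zb) * nA * np (xn - x)" by simp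
    have H: "real_of_ereal (h xn) - real_of_ereal (h x) - gh x \<bullet> (xn - x) \<le> L * bdist \<phi> g\<phi> xn x"
      using L_smooth xnD h(1) by blast
    have d: "(np (xn - x))\<^sup>2 \<le> 2 * bdist \<phi> g\<phi> xn x" using strong xnD h(1) by fastforce
    have q: "\<beta> * nA\<^sup>2 * \<tau>\<^sup>2 + L * \<tau> \<le> \<delta>\<^sup>2" using quad[OF \<tau>0] h(4) unfolding \<tau>_def by simp
    have q2: "\<beta> * \<tau> * nA\<^sup>2 + L \<le> \<delta>\<^sup>2 / \<tau>" using q \<tau>0 by (simp add: field_simps power2_eq_square)
    have "(zn - zb) \<bullet> (A *v (xn - x)) + (real_of_ereal (h xn) - real_of_ereal (h x) - gh x \<bullet> (xn - x))
        \<le> \<delta>\<^sup>2 / \<tau> * bdist \<phi> g\<phi> xn x + 1 / (2 * (\<beta> * \<tau>)) * (norm (zn - zb))\<^sup>2"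
      by (rule acc_ineq[OF p H d \<tau>0 _ q2]) (use \<beta>0 \<tau>0 nA0 isn_nonneg[OF np_norm] in auto)
    moreover have nx': "bdcv_next Dp \<phi> g\<phi> f gh A b (x, z, zp, \<tau>p, \<beta> * \<tau>p) \<theta> = (xn, zn, z, \<tau>, \<beta> * \<tau>)"
      unfolding nx zn_def \<tau>_def by simp
    ultimately show ?thesis unfolding bdcv_accept_def nx' zb_def[symmetric] Let_def prod.case
      by (simp add: norm_minus_commute)
  qed
  have iter: "(\<exists>i. bdcv_accept Dp \<phi> g\<phi> f h gh A b \<delta> (x, z, zp, \<tau>p, \<beta> * \<tau>p) (\<theta>b / 2 ^ i)) \<and>
     (\<exists>xn zn z' \<tau>. bdcv_next Dp \<phi> g\<phi> f gh A b (x, z, zp, \<tau>p, \<beta> * \<tau>p)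
        (\<theta>b / 2 ^ (LEAST i. bdcv_accept Dp \<phi> g\<phi> f h gh A b \<delta> (x, z, zp, \<tau>p, \<beta> * \<tau>p) (\<theta>b / 2 ^ i)))
      = (xn, zn, z', \<tau>, \<beta> * \<tau>) \<and> xn \<in> interior Dp \<and> \<tau> > 0 \<and> \<tau> \<ge> \<tau>min)"
    if "x \<in> interior Dp" "\<tau>p > 0" "\<tau>p \<ge> \<tau>min" "\<theta>b \<ge> 1" for x z zp \<tau>p \<theta>b
  proof -
    note h = that
    let ?P = "\<lambda>i. bdcv_accept Dp \<phi> g\<phi> f h gh A b \<delta> (x, z, zp, \<tau>p, \<beta> * \<tau>p) (\<theta>b / 2 ^ i)"
    obtain n where n: "\<theta>b * \<tau>p / tstar < 2 ^ n" using real_arch_pow[of 2 "\<theta>b * \<tau>p / tstar"] by auto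
    have "\<theta>b / 2 ^ n * \<tau>p \<le> tstar" using n ts0 by (simp add: field_simps)
    hence ex: "\<exists>i. ?P i" using acc[OF h(1,2)] h(4) by (intro exI[of _ n]) simp
    define i0 where "i0 = (LEAST i. ?P i)"
    define \<theta>0 where "\<theta>0 = \<theta>b / 2 ^ i0"
    have th0: "\<theta>0 > 0" unfolding \<theta>0_def using h(4) by simp
    obtain xn where xn: "xn \<in> interior Dp" and nx: "bdcv_next Dp \<phi> g\<phi> f gh A b (x, z, zp, \<tau>p, \<beta> * \<tau>p) \<theta>0
      = (xn, z + (\<theta>0 * (\<beta> * \<tau>p)) *\<^sub>R (A *v xn - b), z, \<theta>0 * \<tau>p, \<theta>0 * (\<beta> * \<tau>p))"
      using nxt[OF h(1,2) th0] by blast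
    have lb: "\<theta>0 * \<tau>p \<ge> \<tau>min"
    proof (cases i0)
      case 0
      then have "\<theta>0 * \<tau>p \<ge> \<tau>p" unfolding \<theta>0_def using h by simp
      then show ?thesis using h(3) by simp
    next
      case (Suc j)
      have "\<not> ?P j" using not_less_Least[of j ?P] Suc unfolding i0_def by simp
      hence "\<not> \<theta>b / 2 ^ j * \<tau>p \<le> tstar" using acc[OF h(1,2)] h(4) by auto
      hence "\<theta>0 * \<tau>p > tstar / 2" unfolding \<theta>0_def Suc by (simp add: field_simps)
      then show ?thesis unfolding \<tau>min_def by simp
    qed
    show ?thesis
    proof (intro conjI ex exI)
      show "bdcv_next Dp \<phi> g\<phi> f gh A b (x, z, zp, \<tau>p, \<beta> * \<tau>p) (\<theta>b / 2 ^ (LEAST i. ?P i))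
        = (xn, z + (\<theta>0 * (\<beta> * \<tau>p)) *\<^sub>R (A *v xn - b), z, \<theta>0 * \<tau>p, \<beta> * (\<theta>0 * \<tau>p))"
        using nx unfolding \<theta>0_def i0_def by (simp add: algebra_simps)
    qed (use xn th0 h(2) lb in auto)
  qed
  let ?run = "bdcv_run Dp \<phi> g\<phi> f h gh A b \<delta> x0 z0 \<tau>m1 \<sigma>m1 \<theta>bar"
  have inv: "\<exists>x z zp \<tau>p. ?run k = (x, z, zp, \<tau>p, \<beta> * \<tau>p) \<and> x \<in> interior Dp \<and> \<tau>p > 0 \<and> \<tau>p \<ge> \<tau>min" for k
  proof (induction k)
    case 0
    have "\<sigma>m1 = \<beta> * \<tau>m1" unfolding \<beta>_def using steps by simp
    then show ?case using x0 steps unfolding \<tau>min_def by auto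
  next
    case (Suc k)
    then obtain x z zp \<tau>p where r: "?run k = (x, z, zp, \<tau>p, \<beta> * \<tau>p)" and
      c: "x \<in> interior Dp" "\<tau>p > 0" "\<tau>p \<ge> \<tau>min" by blast
    show ?case using iter[OF c \<theta>bar[rule_format, of k]] by (simp add: r Let_def)
  qed
  show ?thesis
  proof (intro allI conjI)
    fix k
    obtain x z zp \<tau>p where r: "?run k = (x, z, zp, \<tau>p, \<beta> * \<tau>p)" and
      c: "x \<in> interior Dp" "\<tau>p > 0" "\<tau>p \<ge> \<tau>min" using inv by blast
    note it = iter[where z=z and zp=zp, OF c \<theta>bar[rule_format, of k]]
    show "\<exists>i. bdcv_accept Dp \<phi> g\<phi> f h gh A b \<delta> (?run k) (\<theta>bar k / 2 ^ i)" using it r by simp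
    have tm: "min \<tau>m1 ((- L + sqrt (L\<^sup>2 + 4 * \<delta>\<^sup>2 * \<beta> * nA\<^sup>2)) / (4 * \<beta> * nA\<^sup>2)) = \<tau>min"
      unfolding \<tau>min_def tstar_def by (simp add: algebra_simps)
    obtain xn zn z' \<tau> where "?run (Suc k) = (xn, zn, z', \<tau>, \<beta> * \<tau>)" "\<tau> \<ge> \<tau>min"
      using it r by (auto simp: Let_def)
    then show "let \<beta> = \<sigma>m1 / \<tau>m1; nA = opnorm_p np A;
              \<tau>min = min \<tau>m1 ((- L + sqrt (L\<^sup>2 + 4 * \<delta>\<^sup>2 * \<beta> * nA\<^sup>2)) / (4 * \<beta> * nA\<^sup>2));
              s' = ?run (Suc k)
          in fst (snd (snd (snd s'))) \<ge> \<tau>min \<and> snd (snd (snd (snd s'))) \<ge> \<beta> * \<tau>min"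
      unfolding Let_def \<beta>_def[symmetric] nA_def[symmetric] tm using \<beta>0 by simp
  qed
qed

end
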